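(* Let $R:\mathbb{R}^4\to\mathbb{R}^4$ be any rotation, let $\mathcal{C}=\{(x,y,z,w)\in\mathbb{R}^4: x^2+y^2=\tfrac12=z^2+w^2\}$ be the Clifford torus, and let $Q=\pi\big(R(\mathcal{C})\setminus\{(0,0,0,1)\}\big)\subset\mathbb{R}^3$. Then there is a line $l\subset\mathbb{R}^3$ such that $Q$ has generalized reflectional symmetry along $l$.
   Context: A rotation of $\mathbb{R}^n$ is a linear map $\mathbb{R}^n\to\mathbb{R}^n$ whose matrix is orthogonal with determinant $1$. The unit three-sphere is $\mathbb{S}^3=\{\mathbf{x}\in\mathbb{R}^4:|\mathbf{x}|=1\}$, which every rotation maps onto itself. Stereographic projection $\pi:\mathbb{S}^3\setminus\{(0,0,0,1)\}\to\mathbb{R}^3$ is $\pi(x,y,z,w)=\frac{1}{1-w}(x,y,z)$. For $\mathbf{a}\in\mathbb{R}^3$ and $\rho>0$, reflection (inversion) about the sphere of center $\mathbf{a}$ and radius $\rho$ is the map $\psi_{\mathbf{a},\rho}:\mathbb{R}^3\setminus\{\mathbf{a}\}\to\mathbb{R}^3\setminus\{\mathbf{a}\}$, $\psi_{\mathbf{a},\rho}(\mathbf{p})=\rho^2\frac{\mathbf{p}-\mathbf{a}}{|\mathbf{p}-\mathbf{a}|^2}+\mathbf{a}$. A set $Q\subset\mathbb{R}^3$ has generalized reflectional symmetry along a line $l\subset\mathbb{R}^3$ if there exist a point $\mathbf{m}_0\in l$ and a number $\rho_0>0$ such that for every $\mathbf{a}\in l$, setting $\rho=\sqrt{|\mathbf{a}-\mathbf{m}_0|^2+\rho_0^2}$,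 one has $\psi_{\mathbf{a},\rho}(Q\setminus\{\mathbf{a}\})=Q\setminus\{\mathbf{a}\}$ (when $\mathbf{a}\notin Q$ this says $\psi_{\mathbf{a},\rho}(Q)=Q$). *)

theory Defs
  imports "HOL-Analysis.Analysis"
begin

definition rotation_matrix :: "real^'n^'n \<Rightarrow> bool" where
  "rotation_matrix A \<longleftrightarrow> orthogonal_matrix A \<and> det A = 1"

definition stereo :: "real^4 \<Rightarrow> real^3" where
  "stereo p = (1 / (1 - p$4)) *\<^sub>R vector [p$1, p$2, p$3]"

definition north_pole :: "real^4" where
  "north_pole = vector [0, 0, 0, 1]"

definition clifford_torus :: "(real^4) set" where
  "clifford_torus = {p. (p$1)\<^sup>2 + (p$2)\<^sup>2 = 1/2 \<and> (p$3)\<^sup>2 + (p$4)\<^sup>2 = 1/2}"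

definition sphere_inversion :: "real^3 \<Rightarrow> real \<Rightarrow> real^3 \<Rightarrow> real^3" where
  "sphere_inversion a \<rho> p = (\<rho>\<^sup>2 / (norm (p - a))\<^sup>2) *\<^sub>R (p - a) + a"

definition is_line :: "(real^3) set \<Rightarrow> bool" where
  "is_line l \<longleftrightarrow> (\<exists>p d. d \<noteq> 0 \<and> l = {p + t *\<^sub>R d | t. t \<in> (UNIV :: real set)})"

definition gen_refl_sym :: "(real^3) set \<Rightarrow> (real^3) set \<Rightarrow> bool" where
  "gen_refl_sym Q l \<longleftrightarrow> (\<exists>m0 \<in> l. \<exists>\<rho>0 > 0. \<forall>a \<in> l.
     sphere_inversion a (sqrt ((norm (a - m0))\<^sup>2 + \<rho>0\<^sup>2)) ` (Q - {a}) = Q - {a})"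

end

theory Submission
  imports Defs
begin


definition nvec :: "real^3 \<Rightarrow> real^4" where
  "nvec a = vector [-(a$1), -(a$2), -(a$3), 1]"

definition refl4 :: "real^4 \<Rightarrow> real^4 \<Rightarrow> real^4" where
  "refl4 n y = y - (2 * (y \<bullet> n) / (n \<bullet> n)) *\<^sub>R n"

lemma vector_4 [simp]:
 "(vector [x,y,z,w] ::('a::zero)^4)$1 = x"
 "(vector [x,y,z,w] ::('a::zero)^4)$2 = y"
 "(vector [x,y,z,w] ::('a::zero)^4)$3 = z"
 "(vector [x,y,z,w] ::('a::zero)^4)$4 = w"
  unfolding vector_def by simp_all

lemma inner4: "(x::real^4) \<bullet> y = x$1*y$1 + x$2*y$2 + x$3*y$3 + x$4*y$4"
  by (simp add: inner_vec_def sum_4)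

lemma norm3sq: "(norm (v::real^3))\<^sup>2 = (v$1)\<^sup>2 + (v$2)\<^sup>2 + (v$3)\<^sup>2"
  by (simp only: power2_norm_eq_inner) (simp add: inner_vec_def sum_3 power2_eq_square)

lemma keyE:
  fixes x1 x2 x3 x4 a1 a2 a3 :: real
  assumes "x1^2+x2^2+x3^2+x4^2 = 1" "x4 \<noteq> 1"
  shows "(1-x4)*((x1/(1-x4)-a1)^2+(x2/(1-x4)-a2)^2+(x3/(1-x4)-a3)^2)
     = 2*(x4 - (a1*x1+a2*x2+a3*x3)) + (a1^2+a2^2+a3^2+1)*(1-x4)"
proof -
  define s where "s = 1 - x4"
  have s: "s \<noteq> 0" using assms by (simp add: s_def)
  define y1 where "y1 = x1/s"
  define y2 where "y2 = x2/s"
  define y3 where "y3 = x3/s"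
  have x: "x1 = s*y1" "x2 = s*y2" "x3 = s*y3" using s by (simp_all add: y1_def y2_def y3_def)
  have "(s * s) * (y1^2+y2^2+y3^2) = s*(1+x4)" using assms(1) unfolding x s_def
    by (simp add: algebra_simps power2_eq_square)
  hence h: "s*(y1^2+y2^2+y3^2) = 1+x4" using s by (simp add: mult.assoc)
  have "s * ((y1-a1)^2+(y2-a2)^2+(y3-a3)^2) = s * (y1^2+y2^2+y3^2) - 2 * (a1 * (s * y1) + a2 * (s * y2) + a3 * (s * y3)) + (a1^2+a2^2+a3^2) * s"
    by (simp add: algebra_simps power2_eq_square)
  also have "... = 2*(x4 - (a1*x1+a2*x2+a3*x3)) + (a1^2+a2^2+a3^2+1)*(1-x4)"
    by (simp only: h x[symmetric]) (simp add: s_def algebra_simps)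
  finally show ?thesis unfolding s_def[symmetric] y1_def[symmetric] y2_def[symmetric] y3_def[symmetric] .
qed


lemma stereo_comp:
  "stereo x $ 1 = x$1 / (1 - x$4)" "stereo x $ 2 = x$2 / (1 - x$4)" "stereo x $ 3 = x$3 / (1 - x$4)"
  by (simp_all add: stereo_def divide_inverse mult.commute)

lemma nvec_inner:
  "x \<bullet> nvec a = x$4 - (a$1 * x$1 + a$2 * x$2 + a$3 * x$3)"
  "nvec a \<bullet> nvec a = (a$1)^2 + (a$2)^2 + (a$3)^2 + 1"
  by (simp_all add: inner4 nvec_def algebra_simps power2_eq_square)

lemma refl_comp:
  fixes x :: "real^4" and a :: "real^3"
  defines "u \<equiv> x$4 - (a$1 * x$1 + a$2 * x$2 + a$3 * x$3)"
    and "k \<equiv> (a$1)^2 + (a$2)^2 + (a$3)^2 + 1"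
  shows "refl4 (nvec a) x $ 1 = x$1 + (2 * u / k) * a$1"
    "refl4 (nvec a) x $ 2 = x$2 + (2 * u / k) * a$2"
    "refl4 (nvec a) x $ 3 = x$3 + (2 * u / k) * a$3"
    "refl4 (nvec a) x $ 4 = x$4 - (2 * u / k)"
proof -
  have r: "refl4 (nvec a) x = x - (2 * u / k) *\<^sub>R nvec a"
    proof -
    have nn: "nvec a \<bullet> nvec a = k" unfolding k_def by (rule nvec_inner(2))
    have xn: "x \<bullet> nvec a = u" unfolding u_def by (rule nvec_inner(1))
    show ?thesis unfolding refl4_def nn xn by simp
  qed
  show "refl4 (nvec a) x $ 1 = x$1 + (2 * u / k) * a$1"
    "refl4 (nvec a) x $ 2 = x$2 + (2 * u / k) * a$2"
    "refl4 (nvec a) x $ 3 = x$3 + (2 * u / k) * a$3"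
    "refl4 (nvec a) x $ 4 = x$4 - (2 * u / k)"
    unfolding r by (simp_all add: nvec_def)
qed

lemma sph_comps:
  fixes x :: "real^4"
  assumes "x \<bullet> x = 1"
  shows "(x$1)^2 + (x$2)^2 + (x$3)^2 + (x$4)^2 = 1"
  using assms by (simp add: inner4 power2_eq_square)

lemma L1:
  assumes "x \<bullet> x = 1" "x$4 \<noteq> 1"
  shows "stereo x = a \<longleftrightarrow> refl4 (nvec a) x $ 4 = 1"
proof -
  define u where "u = x$4 - (a$1 * x$1 + a$2 * x$2 + a$3 * x$3)"
  define k where "k = (a$1)^2 + (a$2)^2 + (a$3)^2 + 1"
  define D where "D = (x$1/(1-x$4)-a$1)^2+(x$2/(1-x$4)-a$2)^2+(x$3/(1-x$4)-a$3)^2"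
  have kp: "k > 0" unfolding k_def by (intro add_nonneg_pos add_nonneg_nonneg zero_le_power2 zero_less_one)
  have E: "(1 - x$4) * D = 2 * u + k * (1 - x$4)"
    unfolding D_def u_def k_def using keyE[OF sph_comps[OF assms(1)] assms(2)] by simp
  have s: "1 - x$4 \<noteq> 0" using assms by simp
  have "refl4 (nvec a) x $ 4 = 1 \<longleftrightarrow> 2 * u + k * (1 - x$4) = 0"
    using kp unfolding refl_comp u_def[symmetric] k_def[symmetric] by (auto simp: field_simps)
  also have "... \<longleftrightarrow> D = 0" using E s by (metis mult_eq_0_iff)
  also have "... \<longleftrightarrow> stereo x = a"
    unfolding D_def vec_eq_iff forall_3 stereo_comp
    by (smt (verit) sum_power2_eq_zero_iff zero_le_power2)
  finally show ?thesis ..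
qed

lemma L2real:
  fixes s k u xi ai x4 :: real
  assumes "s = 1 - x4" "s \<noteq> 0" "k > 0" "2 * u + k * s \<noteq> 0"
  shows "(k / ((2 * u + k * s) / s)) * (xi / s - ai) + ai = (xi + (2 * u / k) * ai) / (1 - (x4 - 2 * u / k))"
proof -
  from assms(1) have x4: "x4 = 1 - s" by simp
  have h: "1 - (x4 - 2 * u / k) = (2 * u + k * s) / k" unfolding x4 using assms(2-4) by (simp add: field_simps)
  have n0: "k * s + 2 * u \<noteq> 0" using assms(4) by (simp add: add.commute)
  have n1: "s * (k * s + 2 * u) \<noteq> 0" "k * (k * s + 2 * u) \<noteq> 0"
    using assms(2,3) n0 by simp_all
  show ?thesis unfolding h using assms(2-4) n0 n1 by (simp add: field_simps)
qed

lemma L2: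
  assumes "x \<bullet> x = 1" "x$4 \<noteq> 1" "refl4 (nvec a) x $ 4 \<noteq> 1"
  shows "sphere_inversion a (sqrt ((norm a)^2 + 1)) (stereo x) = stereo (refl4 (nvec a) x)"
proof -
  define u where "u = x$4 - (a$1 * x$1 + a$2 * x$2 + a$3 * x$3)"
  define k where "k = (a$1)^2 + (a$2)^2 + (a$3)^2 + 1"
  define s where "s = 1 - x$4"
  define D where "D = (x$1/(1-x$4)-a$1)^2+(x$2/(1-x$4)-a$2)^2+(x$3/(1-x$4)-a$3)^2"
  have kp: "k > 0" unfolding k_def by (intro add_nonneg_pos add_nonneg_nonneg zero_le_power2 zero_less_one)
  have E: "s * D = 2 * u + k * s"
    unfolding D_def u_def k_def s_def using keyE[OF sph_comps[OF assms(1)] assms(2)] by simp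
  have sn: "s \<noteq> 0" using assms by (simp add: s_def)
  have nz: "2 * u + k * s \<noteq> 0"
    using assms(3) kp unfolding refl_comp u_def[symmetric] k_def[symmetric] s_def by (auto simp: field_simps)
  have D: "D = (2 * u + k * s) / s" using E sn by (simp add: field_simps)
  have rho: "(sqrt ((norm a)^2 + 1))^2 = k" unfolding k_def norm3sq
    by (simp add: add_nonneg_nonneg)
  have nD: "(norm (stereo x - a))^2 = D" unfolding norm3sq D_def by (simp add: stereo_comp)
  show ?thesis
    unfolding sphere_inversion_def rho nD D vec_eq_iff forall_3
    apply (simp only: vector_add_component vector_scaleR_component vector_minus_component
       stereo_comp refl_comp real_scaleR_def u_def[symmetric] k_def[symmetric] s_def[symmetric])
    apply (intro conjI; rule L2real[OF s_def sn kp nz])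
    done
qed



lemma refl4_invol:
  assumes "n \<noteq> 0"
  shows "refl4 n (refl4 n x) = x"
proof -
  have nn: "n \<bullet> n \<noteq> 0" using assms by simp
  have "refl4 n x \<bullet> n = - (x \<bullet> n)"
    unfolding refl4_def using nn by (simp add: inner_diff_left algebra_simps)
  then show ?thesis unfolding refl4_def using nn by (simp add: algebra_simps)
qed

lemma refl4_inner:
  "refl4 n x \<bullet> refl4 n x = x \<bullet> x"
proof (cases "n \<bullet> n = 0")
  case True then show ?thesis by (simp add: refl4_def)
next
  case False
  then show ?thesis unfolding refl4_def
    by (simp add: inner_diff_left inner_diff_right inner_commute field_simps power2_eq_square)
qed

lemma nvec_nz: "nvec a \<noteq> 0"
proof
  assume "nvec a = 0"
  then have "nvec a $ 4 = 0" by simp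
  then show False by (simp add: nvec_def)
qed

lemma N_char:
  fixes y :: "real^4"
  assumes "y \<bullet> y = 1"
  shows "y = north_pole \<longleftrightarrow> y $ 4 = 1"
proof
  assume "y = north_pole" then show "y $ 4 = 1" by (simp add: north_pole_def)
next
  assume h: "y $ 4 = 1"
  have "(y$1)^2 + (y$2)^2 + (y$3)^2 = 0" using sph_comps[OF assms] h by simp
  then have "y$1 = 0 \<and> y$2 = 0 \<and> y$3 = 0"
    by (smt (verit) sum_power2_eq_zero_iff zero_le_power2)
  then show "y = north_pole" using h unfolding vec_eq_iff forall_4 by (simp add: north_pole_def)
qed



lemma inv_main:
  assumes S: "\<And>x. x \<in> S \<Longrightarrow> x \<bullet> x = 1" and inv: "\<And>x. x \<in> S \<Longrightarrow> refl4 (nvec a) x \<in> S"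
  shows "sphere_inversion a (sqrt ((norm a)^2+1)) ` (stereo ` (S - {north_pole}) - {a})
       = stereo ` (S - {north_pole}) - {a}"
proof -
  let ?f = "refl4 (nvec a)"
  let ?g = "sphere_inversion a (sqrt ((norm a)^2+1))"
  have step: "?g (stereo x) = stereo (?f x) \<and> ?f x \<in> S - {north_pole} \<and> stereo (?f x) \<noteq> a"
    if x: "x \<in> S" "x \<noteq> north_pole" "stereo x \<noteq> a" for x
  proof -
    have xx: "x \<bullet> x = 1" using S x by blast
    have x4: "x $ 4 \<noteq> 1" using N_char[OF xx] x by blast
    have fx: "?f x $ 4 \<noteq> 1" using L1[OF xx x4] x by blast
    have fxx: "?f x \<bullet> ?f x = 1" using xx refl4_inner by simp
    have ffx: "?f (?f x) = x" by (rule refl4_invol[OF nvec_nz])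
    have "stereo (?f x) \<noteq> a" using L1[OF fxx fx] ffx x4 by simp
    moreover have "?f x \<noteq> north_pole" using N_char[OF fxx] fx by blast
    ultimately show ?thesis using L2[OF xx x4 fx] inv x by blast
  qed
  show ?thesis
  proof
    show "?g ` (stereo ` (S - {north_pole}) - {a}) \<subseteq> stereo ` (S - {north_pole}) - {a}"
    proof
      fix y assume "y \<in> ?g ` (stereo ` (S - {north_pole}) - {a})"
      then obtain q where q: "q \<in> stereo ` (S - {north_pole}) - {a}" "y = ?g q" by (rule imageE)
      then obtain x where x: "x \<in> S" "x \<noteq> north_pole" "stereo x \<noteq> a" "q = stereo x" by blast
      have st: "?g (stereo x) = stereo (?f x)" "?f x \<in> S - {north_pole}" "stereo (?f x) \<noteq> a"
        using step[OF x(1-3)] by auto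
      have "y = stereo (?f x)" using q(2) x(4) st(1) by simp
      moreover have "stereo (?f x) \<in> stereo ` (S - {north_pole})" using st(2) by (rule imageI)
      ultimately show "y \<in> stereo ` (S - {north_pole}) - {a}" using st(3) by simp
    qed
  next
    show "stereo ` (S - {north_pole}) - {a} \<subseteq> ?g ` (stereo ` (S - {north_pole}) - {a})"
    proof
      fix q assume "q \<in> stereo ` (S - {north_pole}) - {a}"
      then obtain x where x: "x \<in> S" "x \<noteq> north_pole" "stereo x \<noteq> a" "q = stereo x" by blast
      have s1: "?f x \<in> S - {north_pole}" "stereo (?f x) \<noteq> a" using step[OF x(1-3)] by auto
      have s2: "?f x \<in> S" "?f x \<noteq> north_pole" using s1(1) by auto
      have "?g (stereo (?f x)) = stereo (?f (?f x))" using step[OF s2 s1(2)] by (rule conjunct1)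
      also have "... = q" using refl4_invol[OF nvec_nz] x(4) by simp
      finally have qq: "q = ?g (stereo (?f x))" by simp
      have "stereo (?f x) \<in> stereo ` (S - {north_pole}) - {a}" using s1 by auto
      then show "q \<in> ?g ` (stereo ` (S - {north_pole}) - {a})" unfolding qq by (rule imageI)
    qed
  qed
qed


lemma gen_from_line:
  fixes p d :: "real^3"
  assumes d: "d \<noteq> 0"
    and H: "\<And>t. sphere_inversion (p + t *\<^sub>R d) (sqrt ((norm (p + t *\<^sub>R d))^2+1)) ` (Q - {p + t *\<^sub>R d})
              = Q - {p + t *\<^sub>R d}"
  shows "\<exists>l. is_line l \<and> gen_refl_sym Q l"
proof -
  define l where "l = {p + t *\<^sub>R d | t. t \<in> (UNIV :: real set)}"
  define c where "c = (p \<bullet> d) / (d \<bullet> d)"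
  define m0 where "m0 = p + (- c) *\<^sub>R d"
  define r0 where "r0 = sqrt ((norm m0)^2 + 1)"
  have dd: "d \<bullet> d \<noteq> 0" using d by simp
  have cd: "c * (d \<bullet> d) = p \<bullet> d" unfolding c_def using dd by simp
  have m0d: "m0 \<bullet> d = 0" unfolding m0_def inner_add_left inner_scaleR_left using cd by simp
  have m0d2: "d \<bullet> m0 = 0" using m0d by (simp add: inner_commute)
  have "is_line l" unfolding is_line_def l_def using d by blast
  moreover have "gen_refl_sym Q l"
    unfolding gen_refl_sym_def
  proof (intro bexI[of _ m0] exI[of _ r0] conjI ballI)
    show "m0 \<in> l" unfolding l_def m0_def by blast
    show "r0 > 0" unfolding r0_def by (simp add: add_nonneg_pos)
    fix a assume "a \<in> l"
    then obtain t where a: "a = p + t *\<^sub>R d" unfolding l_def by blast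
    have am: "a = m0 + (t + c) *\<^sub>R d" unfolding a m0_def by (simp add: algebra_simps)
    have "(norm (a - m0))^2 + r0^2 = (norm a)^2 + 1"
      unfolding r0_def am power2_norm_eq_inner
      by (simp add: inner_add_left inner_add_right m0d m0d2 add_nonneg_nonneg)
    then show "sphere_inversion a (sqrt ((norm (a - m0))\<^sup>2 + r0\<^sup>2)) ` (Q - {a}) = Q - {a}"
      using H[of t] a by simp
  qed
  ultimately show ?thesis by blast
qed



lemma clif_sph: "c \<in> clifford_torus \<Longrightarrow> c \<bullet> c = 1"
  unfolding clifford_torus_def by (simp add: inner4 power2_eq_square)

lemma orth_inner:
  assumes "orthogonal_matrix (R :: real^4^4)"
  shows "(R *v x) \<bullet> (R *v y) = x \<bullet> y"
proof -
  have "orthogonal_transformation ((*v) R)"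
    unfolding orthogonal_transformation_matrix
    using assms by (simp add: matrix_vector_mul_linear matrix_of_matrix_vector_mul)
  then show ?thesis unfolding orthogonal_transformation_def by blast
qed

lemma refl_R:
  assumes "orthogonal_matrix (R :: real^4^4)"
  shows "refl4 (R *v z) (R *v c) = R *v (refl4 z c)"
  unfolding refl4_def orth_inner[OF assms]
  by (simp add: matrix_vector_mult_diff_distrib matrix_vector_mult_scaleR)

lemma refl_real:
  fixes c1 c2 z1 z2 :: real
  assumes "z1^2 + z2^2 \<noteq> 0"
  shows "(c1 - (2 * (c1 * z1 + c2 * z2) / (z1^2 + z2^2)) * z1)^2
       + (c2 - (2 * (c1 * z1 + c2 * z2) / (z1^2 + z2^2)) * z2)^2 = c1^2 + c2^2"
proof -
  define Z where "Z = z1^2 + z2^2"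
  define w where "w = c1 * z1 + c2 * z2"
  define l where "l = 2 * w / Z"
  have lZ: "l * Z = 2 * w" unfolding l_def using assms Z_def by simp
  have "(c1 - l * z1)^2 + (c2 - l * z2)^2 = c1^2 + c2^2 - 2 * l * w + l * (l * Z)"
    unfolding Z_def w_def by (simp add: algebra_simps power2_eq_square)
  also have "... = c1^2 + c2^2" unfolding lZ by simp
  finally show ?thesis unfolding l_def w_def Z_def .
qed

lemma refl_C:
  assumes z: "(z$3 = 0 \<and> z$4 = 0) \<or> (z$1 = 0 \<and> z$2 = 0)" and c: "c \<in> clifford_torus"
  shows "refl4 z c \<in> clifford_torus"
proof (cases "z \<bullet> z = 0")
  case True then show ?thesis using c by (simp add: refl4_def)
next
  case False
  have comp: "refl4 z c $ k = c $ k - (2 * (c \<bullet> z) / (z \<bullet> z)) * z $ k" for k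
    by (simp add: refl4_def)
  from z show ?thesis
  proof
    assume h: "z$3 = 0 \<and> z$4 = 0"
    have zz: "z \<bullet> z = (z$1)^2 + (z$2)^2" using h by (simp add: inner4 power2_eq_square)
    have cz: "c \<bullet> z = c$1 * z$1 + c$2 * z$2" using h by (simp add: inner4)
    have "(refl4 z c $ 1)^2 + (refl4 z c $ 2)^2 = (c$1)^2 + (c$2)^2"
      unfolding comp zz cz using False zz refl_real by simp
    moreover have "refl4 z c $ 3 = c $ 3" "refl4 z c $ 4 = c $ 4" using h comp by simp_all
    ultimately show ?thesis using c unfolding clifford_torus_def by simp
  next
    assume h: "z$1 = 0 \<and> z$2 = 0"
    have zz: "z \<bullet> z = (z$3)^2 + (z$4)^2" using h by (simp add: inner4 power2_eq_square)
    have cz: "c \<bullet> z = c$3 * z$3 + c$4 * z$4" using h by (simp add: inner4)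
    have "(refl4 z c $ 3)^2 + (refl4 z c $ 4)^2 = (c$3)^2 + (c$4)^2"
      unfolding comp zz cz using False zz refl_real by simp
    moreover have "refl4 z c $ 1 = c $ 1" "refl4 z c $ 2 = c $ 2" using h comp by simp_all
    ultimately show ?thesis using c unfolding clifford_torus_def by simp
  qed
qed

lemma row4:
  assumes "orthogonal_matrix (R :: real^4^4)"
  shows "(R$4$1)^2 + (R$4$2)^2 + (R$4$3)^2 + (R$4$4)^2 = 1"
proof -
  have "R ** transpose R = mat 1" using assms unfolding orthogonal_matrix_def by simp
  then have "(R ** transpose R) $ 4 $ 4 = 1" by (simp add: mat_def)
  then show ?thesis by (simp add: matrix_matrix_mult_def transpose_def sum_4 power2_eq_square)
qed

lemma Rax: "(R *v (a *\<^sub>R axis i 1 + b *\<^sub>R axis j 1)) $ k = a * R$k$i + b * R$k$j"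
  for R :: "real^4^4"
  by (simp add: matrix_vector_right_distrib matrix_vector_mult_scaleR matrix_vector_mult_basis column_def)

lemma line_exists:
  fixes R :: "real^4^4"
  assumes orth: "orthogonal_matrix R" and ij: "i \<noteq> j" and pos: "(R$4$i)^2 + (R$4$j)^2 > 0"
  shows "\<exists>p d. d \<noteq> 0 \<and> (\<forall>t. \<exists>\<mu> \<nu>. nvec (p + t *\<^sub>R d) = R *v (\<mu> *\<^sub>R axis i 1 + \<nu> *\<^sub>R axis j 1))"
proof -
  define al where "al = R$4$i"
  define be where "be = R$4$j"
  define N where "N = al^2 + be^2"
  have N: "N > 0" using pos unfolding N_def al_def be_def .
  define w0 where "w0 = R *v ((al / N) *\<^sub>R axis i 1 + (be / N) *\<^sub>R axis j 1)"
  define w1 where "w1 = R *v ((- be) *\<^sub>R axis i 1 + al *\<^sub>R axis j 1)"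
  define p :: "real^3" where "p = vector [- (w0$1), - (w0$2), - (w0$3)]"
  define d :: "real^3" where "d = vector [- (w1$1), - (w1$2), - (w1$3)]"
  have w04: "w0 $ 4 = 1" unfolding w0_def Rax al_def[symmetric] be_def[symmetric]
  proof -
    have Nn: "al * al + be * be \<noteq> 0" using N unfolding N_def power2_eq_square by linarith
    show "(al / N) * al + (be / N) * be = 1" unfolding N_def power2_eq_square
      using Nn by (simp add: add_divide_distrib[symmetric])
  qed
  have w14: "w1 $ 4 = 0" unfolding w1_def Rax al_def[symmetric] be_def[symmetric] by simp
  have "d \<noteq> 0"
  proof
    assume "d = 0"
    then have "w1 $ 1 = 0 \<and> w1 $ 2 = 0 \<and> w1 $ 3 = 0" unfolding d_def vec_eq_iff forall_3 by simp
    with w14 have "w1 = 0" unfolding vec_eq_iff forall_4 by simp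
    then have "w1 \<bullet> w1 = 0" by simp
    moreover have "w1 \<bullet> w1 = be^2 + al^2" unfolding w1_def orth_inner[OF orth]
      using ij ij[symmetric] by (simp add: inner_add_left inner_add_right inner_diff_left inner_diff_right inner_axis_axis power2_eq_square)
    ultimately show False using N unfolding N_def by simp
  qed
  moreover have "\<forall>t. \<exists>\<mu> \<nu>. nvec (p + t *\<^sub>R d) = R *v (\<mu> *\<^sub>R axis i 1 + \<nu> *\<^sub>R axis j 1)"
  proof
    fix t
    have "nvec (p + t *\<^sub>R d) = R *v ((al / N - t * be) *\<^sub>R axis i 1 + (be / N + t * al) *\<^sub>R axis j 1)"
      unfolding vec_eq_iff forall_4 Rax
    proof (intro conjI)
      show "nvec (p + t *\<^sub>R d) $ 4 = (al / N - t * be) * R $ 4 $ i + (be / N + t * al) * R $ 4 $ j"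
        using w04 unfolding w0_def Rax al_def[symmetric] be_def[symmetric]
        by (simp add: nvec_def algebra_simps)
    qed (simp_all add: nvec_def p_def d_def w0_def w1_def Rax matrix_vector_mult_basis column_def algebra_simps)
    then show "\<exists>\<mu> \<nu>. nvec (p + t *\<^sub>R d) = R *v (\<mu> *\<^sub>R axis i 1 + \<nu> *\<^sub>R axis j 1)" by blast
  qed
  ultimately show ?thesis by blast
qed


theorem theorem2:
  fixes R :: "real^4^4"
  assumes "rotation_matrix R"
  shows "\<exists>l. is_line l \<and>
           gen_refl_sym (stereo ` ((\<lambda>p. R *v p) ` clifford_torus - {north_pole})) l"
proof -
  have orth: "orthogonal_matrix R" using assms unfolding rotation_matrix_def by simp
  define S where "S = (\<lambda>p. R *v p) ` clifford_torus"
  have Ssph: "x \<bullet> x = 1" if xS: "x \<in> S" for x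
  proof -
    obtain c where c: "c \<in> clifford_torus" "x = R *v c" using xS unfolding S_def by blast
    show ?thesis unfolding c(2) orth_inner[OF orth] using clif_sph[OF c(1)] .
  qed
  have Sinv: "refl4 (R *v z) x \<in> S"
    if z: "(z$3 = 0 \<and> z$4 = 0) \<or> (z$1 = 0 \<and> z$2 = 0)" and x: "x \<in> S" for z x
  proof -
    obtain c where c: "c \<in> clifford_torus" "x = R *v c" using x unfolding S_def by blast
    have "refl4 (R *v z) x = R *v (refl4 z c)" unfolding c(2) by (rule refl_R[OF orth])
    moreover have "refl4 z c \<in> clifford_torus" by (rule refl_C[OF z c(1)])
    ultimately show ?thesis unfolding S_def by (rule image_eqI)
  qed
  have fin: "\<exists>l. is_line l \<and> gen_refl_sym (stereo ` (S - {north_pole})) l"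
    if d: "d \<noteq> 0" and H: "\<forall>t. \<exists>z. ((z$3 = 0 \<and> z$4 = 0) \<or> (z$1 = 0 \<and> z$2 = 0)) \<and> nvec (p + t *\<^sub>R d) = R *v z"
    for p d :: "real^3"
  proof (rule gen_from_line[OF d])
    fix t
    obtain z where z: "(z$3 = 0 \<and> z$4 = 0) \<or> (z$1 = 0 \<and> z$2 = 0)" "nvec (p + t *\<^sub>R d) = R *v z"
      using H by blast
    show "sphere_inversion (p + t *\<^sub>R d) (sqrt ((norm (p + t *\<^sub>R d))^2+1)) `
            (stereo ` (S - {north_pole}) - {p + t *\<^sub>R d}) = stereo ` (S - {north_pole}) - {p + t *\<^sub>R d}"
    proof (rule inv_main)
      show "x \<bullet> x = 1" if "x \<in> S" for x using Ssph that .
      show "refl4 (nvec (p + t *\<^sub>R d)) x \<in> S" if "x \<in> S" for x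
        unfolding z(2) using Sinv[OF z(1) that] .
    qed
  qed
  show ?thesis
  proof (cases "(R$4$1)^2 + (R$4$2)^2 > 0")
    case True
    obtain p d where pd: "d \<noteq> 0"
      "\<forall>t. \<exists>\<mu> \<nu>. nvec (p + t *\<^sub>R d) = R *v (\<mu> *\<^sub>R axis 1 1 + \<nu> *\<^sub>R axis 2 1)"
      using line_exists[OF orth _ True] by auto
    have "\<forall>t. \<exists>z. ((z$3 = 0 \<and> z$4 = 0) \<or> (z$1 = 0 \<and> z$2 = 0)) \<and> nvec (p + t *\<^sub>R d) = R *v z"
    proof
      fix t
      obtain \<mu> \<nu> where e: "nvec (p + t *\<^sub>R d) = R *v (\<mu> *\<^sub>R axis 1 1 + \<nu> *\<^sub>R axis 2 1)"
        using pd(2) by blast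
      have "(\<mu> *\<^sub>R axis 1 1 + \<nu> *\<^sub>R axis 2 1 :: real^4) $ 3 = 0 \<and> (\<mu> *\<^sub>R axis 1 1 + \<nu> *\<^sub>R axis 2 1 :: real^4) $ 4 = 0"
        by (simp add: axis_def)
      then show "\<exists>z. ((z$3 = 0 \<and> z$4 = 0) \<or> (z$1 = 0 \<and> z$2 = 0)) \<and> nvec (p + t *\<^sub>R d) = R *v z"
        using e by blast
    qed
    from fin[OF pd(1) this] show ?thesis unfolding S_def .
  next
    case False
    then have "R$4$1 = 0" "R$4$2 = 0"
      by (smt (verit) zero_le_power2 power2_less_eq_zero_iff)+
    then have pos: "(R$4$3)^2 + (R$4$4)^2 > 0" using row4[OF orth] by simp
    obtain p d where pd: "d \<noteq> 0"
      "\<forall>t. \<exists>\<mu> \<nu>. nvec (p + t *\<^sub>R d) = R *v (\<mu> *\<^sub>R axis 3 1 + \<nu> *\<^sub>R axis 4 1)"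
      using line_exists[OF orth _ pos] by auto
    have "\<forall>t. \<exists>z. ((z$3 = 0 \<and> z$4 = 0) \<or> (z$1 = 0 \<and> z$2 = 0)) \<and> nvec (p + t *\<^sub>R d) = R *v z"
    proof
      fix t
      obtain \<mu> \<nu> where e: "nvec (p + t *\<^sub>R d) = R *v (\<mu> *\<^sub>R axis 3 1 + \<nu> *\<^sub>R axis 4 1)"
        using pd(2) by blast
      have "(\<mu> *\<^sub>R axis 3 1 + \<nu> *\<^sub>R axis 4 1 :: real^4) $ 1 = 0 \<and> (\<mu> *\<^sub>R axis 3 1 + \<nu> *\<^sub>R axis 4 1 :: real^4) $ 2 = 0"
        by (simp add: axis_def)
      then show "\<exists>z. ((z$3 = 0 \<and> z$4 = 0) \<or> (z$1 = 0 \<and> z$2 = 0)) \<and> nvec (p + t *\<^sub>R d) = R *v z"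
        using e by blast
    qed
    from fin[OF pd(1) this] show ?thesis unfolding S_def .
  qed
qed

end
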